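(* Let $\Gamma$ be an immersed, connected, $C^2$ planar curve with total curvature $\int_\Gamma|\kappa|\,ds\le\pi/4$. Then $\mathrm{Ent}[\Gamma]\le\sqrt{2}$.
   Context: $\kappa$ is the signed curvature and $ds$ arc length. For a curve $\Gamma$, $F_{x_0,\lambda}[\Gamma]=\frac{1}{\sqrt{4\pi\lambda}}\int_\Gamma e^{-|x-x_0|^2/(4\lambda)}\,ds$ (integral over the parametrization) and $\mathrm{Ent}[\Gamma]=\sup_{x_0\in\mathbb{R}^2,\lambda>0}F_{x_0,\lambda}[\Gamma]$. *)

theory Defs
  imports "HOL-Analysis.Analysis"
begin

text \<open>Planar curves are modelled as maps into the complex plane, parametrised
by a (possibly unbounded, open or closed) interval I of reals.
g1 and g2 are the first and second derivatives of the parametrisation.\<close>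

definition signed_curvature :: "(real \<Rightarrow> complex) \<Rightarrow> (real \<Rightarrow> complex) \<Rightarrow> real \<Rightarrow> real" where
  "signed_curvature g1 g2 t = Im (cnj (g1 t) * g2 t) / (cmod (g1 t)) ^ 3"

definition total_curvature :: "real set \<Rightarrow> (real \<Rightarrow> complex) \<Rightarrow> (real \<Rightarrow> complex) \<Rightarrow> ennreal" where
  "total_curvature I g1 g2 =
     (\<integral>\<^sup>+ t. ennreal (\<bar>signed_curvature g1 g2 t\<bar> * cmod (g1 t)) * indicator I t \<partial>lborel)"

definition F_functional :: "complex \<Rightarrow> real \<Rightarrow> real set \<Rightarrow> (real \<Rightarrow> complex) \<Rightarrow> (real \<Rightarrow> complex) \<Rightarrow> ennreal" where
  "F_functional x0 lam I g g1 =
     (\<integral>\<^sup>+ t. ennreal (exp (- (cmod (g t - x0))\<^sup>2 / (4 * lam)) * cmod (g1 t) / sqrt (4 * pi * lam))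
              * indicator I t \<partial>lborel)"

definition entropy :: "real set \<Rightarrow> (real \<Rightarrow> complex) \<Rightarrow> (real \<Rightarrow> complex) \<Rightarrow> ennreal" where
  "entropy I g g1 = (SUP p \<in> UNIV \<times> {0<..}. F_functional (fst p) (snd p) I g g1)"

end

theory Submission imports Defs "HOL-Probability.Distributions" begin

lemma angle_bound:
  fixes g1 g2 :: "real \<Rightarrow> complex" and I :: "real set"
  assumes interval: "is_interval I"
    and d2: "\<And>t. t \<in> I \<Longrightarrow> (g1 has_vector_derivative g2 t) (at t within I)"
    and c2: "continuous_on I g2"
    and immersed: "\<And>t. t \<in> I \<Longrightarrow> g1 t \<noteq> 0"
    and tc: "total_curvature I g1 g2 \<le> ennreal (pi / 4)"
    and s: "s \<in> I" and t: "t \<in> I"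
  shows "cmod (g1 t) * cmod (g1 s) / sqrt 2 \<le> Re (g1 t * cnj (g1 s))"
proof -
  define a where "a = min s t"
  define b where "b = max s t"
  have ab: "a \<le> b" unfolding a_def b_def by auto
  have sub: "{a..b} \<subseteq> I"
  proof
    fix x assume x: "x \<in> {a..b}"
    have "a \<in> I" "b \<in> I" unfolding a_def b_def min_def max_def using s t by simp_all
    then show "x \<in> I" using interval x unfolding is_interval_1 by (meson atLeastAtMost_iff)
  qed
  have cont1: "continuous_on I g1"
    using d2 has_vector_derivative_continuous continuous_on_eq_continuous_within by blast
  define q where "q r = g2 r / g1 r" for r
  have contq: "continuous_on {a..b} q"
    unfolding q_def using sub immersed
    by (auto intro!: continuous_on_divide continuous_on_subset[OF cont1] continuous_on_subset[OF c2])
  define \<psi> where "\<psi> u = integral {a..u} q" for u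
  have d\<psi>: "(\<psi> has_vector_derivative q r) (at r within {a..b})" if "r \<in> {a..b}" for r
    unfolding \<psi>_def using integral_has_vector_derivative[OF contq that] .
  define h where "h r = g1 r * exp (- \<psi> r)" for r
  have dh: "(h has_vector_derivative 0) (at r within {a..b})" if r: "r \<in> {a..b}" for r
  proof -
    have g1d: "(g1 has_vector_derivative g2 r) (at r within {a..b})"
      using d2[of r] r sub has_vector_derivative_within_subset by blast
    have ed: "((\<lambda>z. exp (- z)) has_field_derivative (- exp (- \<psi> r))) (at (\<psi> r) within \<psi> ` {a..b})"
      by (auto intro!: derivative_eq_intros)
    have ed2: "((\<lambda>u. exp (- \<psi> u)) has_vector_derivative (q r * (- exp (- \<psi> r)))) (at r within {a..b})"
      using field_vector_diff_chain_within[OF d\<psi>[OF r] ed] by (simp add: o_def)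
    have "(h has_vector_derivative (g1 r * (q r * (- exp (- \<psi> r))) + g2 r * exp (- \<psi> r))) (at r within {a..b})"
      unfolding h_def using has_vector_derivative_mult[OF g1d ed2] .
    moreover have "g1 r * (q r * (- exp (- \<psi> r))) + g2 r * exp (- \<psi> r) = 0"
      using immersed[of r] r sub unfolding q_def by (auto simp: field_simps)
    ultimately show ?thesis by simp
  qed
  obtain c where c: "\<And>r. r \<in> {a..b} \<Longrightarrow> h r = c"
    using has_derivative_zero_constant[of "{a..b}" h] dh
    unfolding has_vector_derivative_def by auto
  have sab: "s \<in> {a..b}" "t \<in> {a..b}" unfolding a_def b_def by auto
  define D where "D = \<psi> t - \<psi> s"
  have hts: "h t = h s" using c sab by auto
  have g1t: "g1 t = g1 s * exp D"
  proof -
    have "g1 t = h t * exp (\<psi> t)" unfolding h_def by (simp add: exp_minus field_simps)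
    also have "\<dots> = g1 s * exp (- \<psi> s) * exp (\<psi> t)" using hts unfolding h_def by simp
    also have "\<dots> = g1 s * exp D" unfolding D_def by (simp add: exp_diff exp_minus field_simps)
    finally show ?thesis .
  qed
  have intq: "q integrable_on {a..b}" using contq integrable_continuous_interval by blast
  have ImD: "\<bar>Im D\<bar> = \<bar>Im (integral {a..b} q)\<bar>"
  proof (cases "s \<le> t")
    case True then have "a = s" "b = t" unfolding a_def b_def by auto
    then show ?thesis unfolding D_def \<psi>_def by simp
  next
    case False then have "a = t" "b = s" unfolding a_def b_def by auto
    then show ?thesis unfolding D_def \<psi>_def by simp
  qed
  have Imint: "Im (integral {a..b} q) = integral {a..b} (\<lambda>r. Im (q r))"
    using integral_linear[OF intq bounded_linear_Im] by (simp add: o_def)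
  have contIm: "continuous_on {a..b} (\<lambda>r. Im (q r))"
    using contq by (intro continuous_intros)
  have intIm: "(\<lambda>r. Im (q r)) integrable_on {a..b}"
    using contIm integrable_continuous_interval by blast
  have intabs: "(\<lambda>r. \<bar>Im (q r)\<bar>) integrable_on {a..b}"
    using contIm integrable_continuous_interval continuous_on_rabs by blast
  have bnd1: "\<bar>integral {a..b} (\<lambda>r. Im (q r))\<bar> \<le> integral {a..b} (\<lambda>r. \<bar>Im (q r)\<bar>)"
    using integral_norm_bound_integral[OF intIm intabs] by simp
  have curv: "\<bar>Im (q r)\<bar> = \<bar>signed_curvature g1 g2 r\<bar> * cmod (g1 r)" if "r \<in> I" for r
  proof -
    have n: "cmod (g1 r) > 0" using immersed[OF that] by simp
    have "Im (q r) = Im (cnj (g1 r) * g2 r) / (cmod (g1 r))^2"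
      unfolding q_def by (subst complex_div_cnj) (simp add: mult.commute)
    moreover have "\<And>x n::real. n > 0 \<Longrightarrow> \<bar>x / n^2\<bar> = \<bar>x / n^3\<bar> * n"
      by (simp add: abs_divide power3_eq_cube power2_eq_square field_simps)
    ultimately show ?thesis using n unfolding signed_curvature_def by metis
  qed
  have "ennreal (integral {a..b} (\<lambda>r. \<bar>Im (q r)\<bar>)) = (\<integral>\<^sup>+ r. ennreal (\<bar>Im (q r)\<bar>) * indicator {a..b} r \<partial>lborel)"
    using nn_integral_has_integral_lebesgue'[of "{a..b}" "\<lambda>r. \<bar>Im (q r)\<bar>", OF _ integrable_integral[OF intabs]] by simp
  also have "\<dots> \<le> total_curvature I g1 g2" unfolding total_curvature_def
  proof (intro nn_integral_mono)
    fix r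
    show "ennreal (\<bar>Im (q r)\<bar>) * indicator {a..b} r \<le> ennreal (\<bar>signed_curvature g1 g2 r\<bar> * cmod (g1 r)) * indicator I r"
    proof (cases "r \<in> {a..b}")
      case True
      then have "r \<in> I" using sub by blast
      then show ?thesis using True curv by simp
    qed simp
  qed
  also have "\<dots> \<le> ennreal (pi / 4)" by (rule tc)
  finally have "integral {a..b} (\<lambda>r. \<bar>Im (q r)\<bar>) \<le> pi / 4"
    using ennreal_le_iff pi_gt_zero by (smt (verit) divide_nonneg_nonneg)
  then have ImDb: "\<bar>Im D\<bar> \<le> pi / 4" using ImD Imint bnd1 by linarith
  have cosD: "sqrt 2 / 2 \<le> cos (Im D)"
  proof -
    have "cos (pi / 4) \<le> cos \<bar>Im D\<bar>"
      by (rule cos_monotone_0_pi_le) (use ImDb pi_gt_zero in auto)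
    then show ?thesis by (simp add: cos_45)
  qed
  have eq1: "g1 t * cnj (g1 s) = complex_of_real ((cmod (g1 s))^2) * exp D"
  proof -
    have "g1 s * cnj (g1 s) = complex_of_real ((cmod (g1 s))^2)" by (metis complex_norm_square)
    moreover have "g1 t * cnj (g1 s) = exp D * (g1 s * cnj (g1 s))" by (simp add: g1t mult_ac)
    ultimately show ?thesis by (simp add: mult_ac)
  qed
  have re1: "Re (g1 t * cnj (g1 s)) = (cmod (g1 s))^2 * (exp (Re D) * cos (Im D))"
    unfolding eq1 by (simp add: Re_exp)
  have nt: "cmod (g1 t) = cmod (g1 s) * exp (Re D)" using g1t by (simp add: norm_mult)
  have r2: "1 / sqrt 2 = sqrt 2 / 2"
    by (metis real_div_sqrt div_by_1 divide_divide_eq_right mult.commute zero_le_numeral)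
  have "cmod (g1 t) * cmod (g1 s) / sqrt 2 = (cmod (g1 s))^2 * exp (Re D) * (sqrt 2 / 2)"
    unfolding nt r2[symmetric] by (simp add: power2_eq_square)
  also have "\<dots> \<le> (cmod (g1 s))^2 * exp (Re D) * cos (Im D)"
    by (intro mult_left_mono cosD) auto
  finally show ?thesis using re1 by (simp add: mult_ac)
qed

theorem lemma3p2:
  fixes g g1 g2 :: "real \<Rightarrow> complex" and I :: "real set"
  assumes interval: "is_interval I" and nonempty: "I \<noteq> {}"
    and d1: "\<And>t. t \<in> I \<Longrightarrow> (g has_vector_derivative g1 t) (at t within I)"
    and d2: "\<And>t. t \<in> I \<Longrightarrow> (g1 has_vector_derivative g2 t) (at t within I)"
    and c2: "continuous_on I g2"
    and immersed: "\<And>t. t \<in> I \<Longrightarrow> g1 t \<noteq> 0"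
    and tc: "total_curvature I g1 g2 \<le> ennreal (pi / 4)"
  shows "entropy I g g1 \<le> ennreal (sqrt 2)"
proof -
  obtain s0 where s0: "s0 \<in> I" using nonempty by blast
  define c where "c = cnj (g1 s0)"
  define N where "N = cmod (g1 s0)"
  have N: "N > 0" using immersed s0 by (simp add: N_def)
  have cN: "cmod c = N" unfolding c_def N_def by simp
  define X where "X t = Re (g t * c) / N" for t
  define X' where "X' t = Re (g1 t * c) / N" for t
  have X'ge: "cmod (g1 t) \<le> sqrt 2 * X' t" if "t \<in> I" for t
  proof -
    have h: "cmod (g1 t) * N / sqrt 2 \<le> Re (g1 t * c)"
      using angle_bound[OF interval d2 c2 immersed tc s0 that] unfolding c_def N_def .
    have "cmod (g1 t) = (cmod (g1 t) * N / sqrt 2) * sqrt 2 / N" using N by simp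
    also have "\<dots> \<le> Re (g1 t * c) * sqrt 2 / N"
      using h N by (intro divide_right_mono mult_right_mono) auto
    finally have "cmod (g1 t) \<le> Re (g1 t * c) * sqrt 2 / N" .
    then show ?thesis unfolding X'_def by (metis mult.commute times_divide_eq_right)
  qed
  have X'pos: "X' t > 0" if "t \<in> I" for t
  proof -
    have "0 < cmod (g1 t)" using immersed[OF that] by simp
    then show ?thesis using X'ge[OF that]
      by (smt (verit, best) mult_nonneg_nonpos real_sqrt_ge_zero)
  qed
  have bl: "bounded_linear (\<lambda>z. Re (z * c) / N)"
    using bounded_linear_compose[OF bounded_linear_divide[of N]
        bounded_linear_compose[OF bounded_linear_Re bounded_linear_mult_left[of c]]] .
  have dX: "(X has_real_derivative X' t) (at t within I)" if "t \<in> I" for t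
    using bounded_linear.has_vector_derivative[OF bl d1[OF that]]
    unfolding has_real_derivative_iff_has_vector_derivative X_def X'_def .
  have contX: "continuous_on I X"
    using dX DERIV_continuous continuous_on_eq_continuous_within by blast
  have smono: "strict_mono_on I X"
  proof (rule strict_mono_onI)
    fix r s assume r: "r \<in> I" and s: "s \<in> I" and rs: "r < s"
    have sub: "{r..s} \<subseteq> I"
    proof
      fix x assume x: "x \<in> {r..s}"
      then show "x \<in> I" using interval r s unfolding is_interval_1 by (meson atLeastAtMost_iff)
    qed
    have "\<exists>x\<in>{r..s}. X s - X r = (\<lambda>h. h * X' x) (s - r)"
    proof (rule mvt_very_simple)
      show "r \<le> s" using rs by simp
      fix x assume rx: "r \<le> x" and xs: "x \<le> s"
      have xI: "x \<in> I" using sub rx xs by (meson atLeastAtMost_iff subsetD)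
      have fe: "(\<lambda>h. h * X' x) = (*) (X' x)" by (auto simp: fun_eq_iff)
      have "(X has_derivative (\<lambda>h. h * X' x)) (at x within I)"
        using dX[OF xI] unfolding has_field_derivative_def fe .
      then show "(X has_derivative (\<lambda>h. h * X' x)) (at x within {r..s})"
        using has_derivative_subset sub by blast
    qed
    then obtain x where x: "x \<in> {r..s}" "X s - X r = (s - r) * X' x" by auto
    have "X' x > 0" using X'pos x sub by auto
    then show "X r < X s" using x rs by (smt (verit) mult_pos_pos)
  qed
  have inj: "inj_on X I" using smono strict_mono_on_imp_inj_on by blast
  have bl_sub: "sets borel \<subseteq> sets lebesgue" by force
  have Ileb: "I \<in> sets lebesgue" using real_interval_borel_measurable[OF interval] bl_sub by blast
  have XIint: "is_interval (X ` I)"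
    using connected_continuous_image[OF contX] interval is_interval_connected_1 by blast
  have XIb: "X ` I \<in> sets borel" using real_interval_borel_measurable[OF XIint] .
  have F_le: "F_functional x0 lam I g g1 \<le> ennreal (sqrt 2)" if lam: "lam > 0" for x0 lam
  proof -
    define \<sigma> where "\<sigma> = sqrt (2 * lam)"
    define a where "a = Re (x0 * c) / N"
    define \<phi> where "\<phi> = normal_density a \<sigma>"
    have \<sigma>2: "\<sigma>^2 = 2 * lam" unfolding \<sigma>_def using lam by simp
    have \<phi>_eq: "\<phi> y = exp (- (y - a)\<^sup>2 / (4 * lam)) / sqrt (4 * pi * lam)" for y
      unfolding \<phi>_def normal_density_def \<sigma>2 by (simp add: field_simps)
    have \<phi>nn: "0 \<le> \<phi> y" for y unfolding \<phi>_def by simp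
    have \<sigma>pos: "\<sigma> > 0" unfolding \<sigma>_def using lam by simp
    have intL: "integrable lborel \<phi>" unfolding \<phi>_def using integrable_normal_density[OF \<sigma>pos] .
    have intU: "\<phi> integrable_on UNIV" using integrable_on_lborel[OF intL] .
    have int1: "integral UNIV \<phi> = 1" using integral_lborel[OF intL] integral_normal_density[OF \<sigma>pos] unfolding \<phi>_def by simp
    have intXI: "\<phi> integrable_on (X ` I)"
    proof -
      have "integrable lborel (\<lambda>x. \<phi> x * indicator (X ` I) x)"
        using integrable_real_mult_indicator[of "X ` I" lborel \<phi>] intL XIb by simp
      then have "(\<lambda>x. \<phi> x * indicator (X ` I) x) integrable_on UNIV"
        using integrable_on_lborel by blast
      moreover have "(\<lambda>x. \<phi> x * indicator (X ` I) x) = (\<lambda>x. if x \<in> X ` I then \<phi> x else 0)"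
        by (auto simp: indicator_def)
      ultimately show ?thesis using integrable_restrict_UNIV by metis
    qed
    have absXI: "\<phi> absolutely_integrable_on (X ` I)"
      using nonnegative_absolutely_integrable_1[OF intXI] \<phi>nn by blast
    define B where "B = integral (X ` I) \<phi>"
    have B1: "B \<le> 1"
      unfolding B_def int1[symmetric] using intXI intU \<phi>nn by (intro integral_subset_le) auto
    have "(\<lambda>x. \<bar>X' x\<bar> * \<phi> (X x)) absolutely_integrable_on I \<and> integral I (\<lambda>x. \<bar>X' x\<bar> * \<phi> (X x)) = B"
      using has_absolute_integral_change_of_variables_1'[OF Ileb dX inj, of \<phi> B] absXI B_def by blast
    then have hi: "((\<lambda>x. \<bar>X' x\<bar> * \<phi> (X x)) has_integral B) I"
      using absolutely_integrable_on_def has_integral_integrable_integral by blast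
    have hi2: "((\<lambda>x. sqrt 2 * (\<bar>X' x\<bar> * \<phi> (X x))) has_integral sqrt 2 * B) I"
      using has_integral_mult_right[OF hi] .
    have nn2: "(\<integral>\<^sup>+ x. ennreal (sqrt 2 * (\<bar>X' x\<bar> * \<phi> (X x))) * indicator I x \<partial>lborel) = ennreal (sqrt 2 * B)"
      using nn_integral_has_integral_lebesgue'[OF _ hi2] \<phi>nn by simp
    have pw: "exp (- (cmod (g t - x0))\<^sup>2 / (4 * lam)) * cmod (g1 t) / sqrt (4 * pi * lam)
        \<le> sqrt 2 * (\<bar>X' t\<bar> * \<phi> (X t))" if t: "t \<in> I" for t
    proof -
      have "\<bar>X t - a\<bar> = \<bar>Re ((g t - x0) * c)\<bar> / N"
      proof -
        have "X t - a = Re ((g t - x0) * c) / N"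
          unfolding X_def a_def by (simp only: left_diff_distrib minus_complex.sel diff_divide_distrib)
        then show ?thesis using N by (simp add: abs_divide)
      qed
      also have "\<dots> \<le> cmod ((g t - x0) * c) / N"
        by (rule divide_right_mono[OF abs_Re_le_cmod]) (use N in simp)
      also have "\<dots> = cmod (g t - x0)" using N cN by (simp add: norm_mult)
      finally have d: "\<bar>X t - a\<bar> \<le> cmod (g t - x0)" .
      have "(X t - a)\<^sup>2 \<le> (cmod (g t - x0))\<^sup>2"
        using d by (metis abs_ge_zero power2_abs power_mono)
      then have e: "exp (- (cmod (g t - x0))\<^sup>2 / (4 * lam)) \<le> exp (- (X t - a)\<^sup>2 / (4 * lam))"
        using lam by (intro exp_mono divide_right_mono) auto
      have sp: "sqrt (4 * pi * lam) > 0" using lam by simp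
      have "exp (- (cmod (g t - x0))\<^sup>2 / (4 * lam)) * cmod (g1 t)
          \<le> exp (- (X t - a)\<^sup>2 / (4 * lam)) * (sqrt 2 * \<bar>X' t\<bar>)"
        using e X'ge[OF t] X'pos[OF t] by (intro mult_mono) auto
      then have "exp (- (cmod (g t - x0))\<^sup>2 / (4 * lam)) * cmod (g1 t) / sqrt (4 * pi * lam)
          \<le> exp (- (X t - a)\<^sup>2 / (4 * lam)) * (sqrt 2 * \<bar>X' t\<bar>) / sqrt (4 * pi * lam)"
        using sp by (intro divide_right_mono) auto
      also have "\<dots> = sqrt 2 * (\<bar>X' t\<bar> * \<phi> (X t))" unfolding \<phi>_eq by simp
      finally show ?thesis .
    qed
    have "F_functional x0 lam I g g1 \<le> (\<integral>\<^sup>+ x. ennreal (sqrt 2 * (\<bar>X' x\<bar> * \<phi> (X x))) * indicator I x \<partial>lborel)"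
      unfolding F_functional_def
    proof (intro nn_integral_mono)
      fix t
      show "ennreal (exp (- (cmod (g t - x0))\<^sup>2 / (4 * lam)) * cmod (g1 t) / sqrt (4 * pi * lam)) * indicator I t
         \<le> ennreal (sqrt 2 * (\<bar>X' t\<bar> * \<phi> (X t))) * indicator I t"
        using pw[of t] by (cases "t \<in> I") (auto intro: ennreal_leI)
    qed
    also have "\<dots> = ennreal (sqrt 2 * B)" by (rule nn2)
    also have "\<dots> \<le> ennreal (sqrt 2)" using B1 by (intro ennreal_leI) auto
    finally show ?thesis .
  qed
  show ?thesis unfolding entropy_def
    by (rule SUP_least) (auto intro: F_le)
qed

end
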